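(* Let $n\ge 2$. The probability $p_n$ that two randomly generated (i.e. an unordered pair of distinct matrices chosen uniformly at random) $n^2\times n^2$ S-permutation matrices are disjoint is $$p_n=\frac{\xi_n}{(n!)^{2n}-1},\qquad\text{where}\qquad \xi_n=\sum_{\overline{A}\in\overline{\mathfrak{B}}_n,\ \varepsilon(\overline{A})\ge 2}(-1)^{\varepsilon(\overline{A})}\,|\overline{A}|\prod_{i=0}^{n-2}\left[(n-i)!\right]^{\psi_i(\overline{A})}.$$
   Context: An $n^2\times n^2$ S-permutation matrix is an $n^2\times n^2$ binary matrix which, when partitioned into $n^2$ non-intersecting consecutive $n\times n$ blocks, contains exactly one $1$ in each row, each column and each block; there are $(n!)^{2n}$ of them. Two binary matrices $(a_{ij}),(b_{ij})$ of equal size are disjoint if there are no $i,j$ with $a_{ij}=b_{ij}=1$. $\mathfrak{B}_n$ is the set of $n\times n$ binary matrices. For $A\in\mathfrak{B}_n$, $r_k(A)$ (resp. $c_k(A)$) is the number of rows (resp. columns) of $A$ with exactly $k$ ones, $\psi_k(A)=r_k(A)+c_k(A)$, and $\varepsilon(A)$ is the total number of ones of $A$. $A\sim B$ iff $B$ is obtained from $A$ by permuting rows; $\overline{A}$ is the equivalence class of $A$, $|\overline{A}|$ its cardinality, $\overline{\mathfrak{B}}_n=\mathfrak{B}_n/\!\sim$; $\psi_k,\varepsilon$ are defined on classes via any representative. *)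

theory Defs
  imports Complex_Main "HOL-Combinatorics.Permutations"
begin

(* Matrices are modelled as 0-indexed boolean functions, entry True = 1,
   required to be False outside the index range. *)

definition binmat :: "nat \<Rightarrow> (nat \<Rightarrow> nat \<Rightarrow> bool) set" where
  "binmat m = {M. \<forall>i j. M i j \<longrightarrow> i < m \<and> j < m}"

definition spm :: "nat \<Rightarrow> (nat \<Rightarrow> nat \<Rightarrow> bool) set" where
  "spm n = {M. M \<in> binmat (n^2)
     \<and> (\<forall>i<n^2. card {j. j < n^2 \<and> M i j} = 1)
     \<and> (\<forall>j<n^2. card {i. i < n^2 \<and> M i j} = 1)
     \<and> (\<forall>a<n. \<forall>b<n. card {(i,j). a*n \<le> i \<and> i < a*n + n \<and> b*n \<le> j \<and> j < b*n + n \<and> M i j} = 1)}"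

definition disjoint_mat :: "(nat \<Rightarrow> nat \<Rightarrow> bool) \<Rightarrow> (nat \<Rightarrow> nat \<Rightarrow> bool) \<Rightarrow> bool" where
  "disjoint_mat A B \<longleftrightarrow> \<not> (\<exists>i j. A i j \<and> B i j)"

definition spm_pairs :: "nat \<Rightarrow> (nat \<Rightarrow> nat \<Rightarrow> bool) set set" where
  "spm_pairs n = {P. P \<subseteq> spm n \<and> card P = 2}"

definition disjoint_spm_pairs :: "nat \<Rightarrow> (nat \<Rightarrow> nat \<Rightarrow> bool) set set" where
  "disjoint_spm_pairs n = {P \<in> spm_pairs n. \<forall>A\<in>P. \<forall>B\<in>P. A \<noteq> B \<longrightarrow> disjoint_mat A B}"

definition prob_disj :: "nat \<Rightarrow> real" where
  "prob_disj n = real (card (disjoint_spm_pairs n)) / real (card (spm_pairs n))"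

definition rk :: "nat \<Rightarrow> nat \<Rightarrow> (nat \<Rightarrow> nat \<Rightarrow> bool) \<Rightarrow> nat" where
  "rk n k A = card {i. i < n \<and> card {j. j < n \<and> A i j} = k}"

definition ck :: "nat \<Rightarrow> nat \<Rightarrow> (nat \<Rightarrow> nat \<Rightarrow> bool) \<Rightarrow> nat" where
  "ck n k A = card {j. j < n \<and> card {i. i < n \<and> A i j} = k}"

definition psi :: "nat \<Rightarrow> nat \<Rightarrow> (nat \<Rightarrow> nat \<Rightarrow> bool) \<Rightarrow> nat" where
  "psi n k A = rk n k A + ck n k A"

definition eps :: "nat \<Rightarrow> (nat \<Rightarrow> nat \<Rightarrow> bool) \<Rightarrow> nat" where
  "eps n A = card {(i,j). i < n \<and> j < n \<and> A i j}"

definition row_equiv :: "nat \<Rightarrow> ((nat \<Rightarrow> nat \<Rightarrow> bool) \<times> (nat \<Rightarrow> nat \<Rightarrow> bool)) set" where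
  "row_equiv n = {(A,B). A \<in> binmat n \<and> B \<in> binmat n \<and>
      (\<exists>\<sigma>. \<sigma> permutes {..<n} \<and> B = (\<lambda>i j. A (\<sigma> i) j))}"

definition classes :: "nat \<Rightarrow> (nat \<Rightarrow> nat \<Rightarrow> bool) set set" where
  "classes n = binmat n // row_equiv n"

definition rep :: "(nat \<Rightarrow> nat \<Rightarrow> bool) set \<Rightarrow> (nat \<Rightarrow> nat \<Rightarrow> bool)" where
  "rep X = (SOME A. A \<in> X)"

definition xi :: "nat \<Rightarrow> int" where
  "xi n = (\<Sum>X \<in> {X \<in> classes n. eps n (rep X) \<ge> 2}.
      (-1) ^ eps n (rep X) * int (card X) *
      (\<Prod>i\<in>{0..n-2}. int (fact (n - i)) ^ psi n i (rep X)))"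

end

theory Submission
  imports Defs
begin


lemma alt_sum_pow:
  assumes "finite T"
  shows "(\<Sum>S\<in>Pow T. (-1::int) ^ card S) = (if T = {} then 1 else 0)"
  using assms
proof (induction T rule: finite_induct)
  case empty then show ?case by simp
next
  case (insert x F)
  have "(\<Sum>S\<in>Pow (insert x F). (-1::int) ^ card S)
      = (\<Sum>S\<in>Pow F. (-1::int) ^ card S) + (\<Sum>S\<in>insert x ` Pow F. (-1::int) ^ card S)"
    using insert by (subst Pow_insert, subst sum.union_disjoint) auto
  also have "(\<Sum>S\<in>insert x ` Pow F. (-1::int) ^ card S) = (\<Sum>S\<in>Pow F. (-1::int) ^ card (insert x S))"
    by (rule sum.reindex_cong[where l="insert x"]) (use insert in \<open>auto simp: inj_on_def\<close>)
  also have "\<dots> = - (\<Sum>S\<in>Pow F. (-1::int) ^ card S)"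
  proof -
    have "\<And>S. S \<in> Pow F \<Longrightarrow> (-1::int) ^ card (insert x S) = - ((-1) ^ card S)"
      using insert by (subst card_insert_disjoint) (auto dest: finite_subset)
    then show ?thesis by (simp add: sum_negf)
  qed
  finally show ?case by simp
qed

lemma incl_excl:
  fixes E :: "'x \<Rightarrow> 'u set"
  assumes "finite X" "finite U" "\<And>x. x \<in> X \<Longrightarrow> E x \<subseteq> U"
  shows "int (card {x\<in>X. E x = {}}) = (\<Sum>S\<in>Pow U. (-1) ^ card S * int (card {x\<in>X. S \<subseteq> E x}))"
proof -
  have "(\<Sum>S\<in>Pow U. (-1) ^ card S * int (card {x\<in>X. S \<subseteq> E x}))
      = (\<Sum>S\<in>Pow U. \<Sum>x\<in>X. if S \<subseteq> E x then (-1::int) ^ card S else 0)"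
    using assms(1) by (intro sum.cong refl) (simp add: sum.If_cases Int_def mult.commute)
  also have "\<dots> = (\<Sum>x\<in>X. \<Sum>S\<in>Pow U. if S \<subseteq> E x then (-1::int) ^ card S else 0)"
    by (rule sum.swap)
  also have "\<dots> = (\<Sum>x\<in>X. \<Sum>S\<in>Pow (E x). (-1::int) ^ card S)"
  proof (rule sum.cong[OF refl])
    fix x assume x: "x \<in> X"
    have "(\<Sum>S\<in>Pow U. if S \<subseteq> E x then (-1::int) ^ card S else 0) = (\<Sum>S\<in>{S\<in>Pow U. S \<subseteq> E x}. (-1::int) ^ card S)"
      using assms(2) by (intro sum.inter_filter[symmetric]) simp
    also have "{S\<in>Pow U. S \<subseteq> E x} = Pow (E x)" using assms(3)[OF x] by auto
    finally show "(\<Sum>S\<in>Pow U. if S \<subseteq> E x then (-1::int) ^ card S else 0) = (\<Sum>S\<in>Pow (E x). (-1::int) ^ card S)" .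
  qed
  also have "\<dots> = (\<Sum>x\<in>X. if E x = {} then 1 else 0)"
    by (rule sum.cong[OF refl], rule alt_sum_pow) (use assms finite_subset in blast)
  also have "\<dots> = int (card {x\<in>X. E x = {}})"
    using assms(1) by (simp add: sum.If_cases Int_def)
  finally show ?thesis by simp
qed

lemma permutes_fix_iff:
  assumes "K \<subseteq> S"
  shows "(p permutes S \<and> (\<forall>b\<in>K. p b = b)) \<longleftrightarrow> p permutes (S - K)"
proof
  assume h: "p permutes S \<and> (\<forall>b\<in>K. p b = b)"
  show "p permutes (S - K)" unfolding permutes_def
  proof (intro conjI allI impI)
    fix x assume "x \<notin> S - K" then show "p x = x" using h permutes_not_in by fastforce
  next
    fix y show "\<exists>!x. p x = y" using h unfolding permutes_def by blast
  qed
next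
  assume h: "p permutes (S - K)"
  then show "p permutes S \<and> (\<forall>b\<in>K. p b = b)"
    using permutes_subset[OF h] permutes_not_in[OF h] by auto
qed

lemma card_perm_ext:
  assumes q: "q permutes {..<n::nat}" and K: "K \<subseteq> {..<n}"
  shows "card {p. p permutes {..<n} \<and> (\<forall>b\<in>K. p b = q b)} = fact (n - card K)"
proof -
  have "bij_betw (\<lambda>p. inv q \<circ> p) {p. p permutes {..<n} \<and> (\<forall>b\<in>K. p b = q b)} {p. p permutes ({..<n} - K)}"
  proof (rule bij_betw_byWitness[where f'="\<lambda>p. q \<circ> p"])
    show "\<forall>a\<in>{p. p permutes {..<n} \<and> (\<forall>b\<in>K. p b = q b)}. q \<circ> (inv q \<circ> a) = a"
      using permutes_inverses(1)[OF q] by (auto simp: fun_eq_iff)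
    show "\<forall>a\<in>{p. p permutes ({..<n} - K)}. inv q \<circ> (q \<circ> a) = a"
      using permutes_inverses(2)[OF q] by (auto simp: fun_eq_iff)
    show "(\<lambda>p. inv q \<circ> p) ` {p. p permutes {..<n} \<and> (\<forall>b\<in>K. p b = q b)} \<subseteq> {p. p permutes ({..<n} - K)}"
    proof safe
      fix p assume p: "p permutes {..<n}" "\<forall>b\<in>K. p b = q b"
      have "(inv q \<circ> p) permutes {..<n} \<and> (\<forall>b\<in>K. (inv q \<circ> p) b = b)"
        using p permutes_compose[OF p(1) permutes_inv[OF q]] permutes_inverses(2)[OF q] by auto
      then show "(inv q \<circ> p) permutes ({..<n} - K)" using permutes_fix_iff[OF K] by blast
    qed
    show "(\<lambda>p. q \<circ> p) ` {p. p permutes ({..<n} - K)} \<subseteq> {p. p permutes {..<n} \<and> (\<forall>b\<in>K. p b = q b)}"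
    proof safe
      fix p assume p: "p permutes ({..<n} - K)"
      then have p': "p permutes {..<n}" "\<forall>b\<in>K. p b = b" using permutes_fix_iff[OF K] by blast+
      show "(q \<circ> p) permutes {..<n}" using permutes_compose[OF p'(1) q] .
      fix b assume "b \<in> K" then show "(q \<circ> p) b = q b" using p' by simp
    qed
  qed
  then have "card {p. p permutes {..<n} \<and> (\<forall>b\<in>K. p b = q b)} = card {p. p permutes ({..<n} - K)}"
    by (rule bij_betw_same_card)
  also have "\<dots> = fact (card ({..<n} - K))" by (rule card_permutations) auto
  also have "card ({..<n} - K) = n - card K" using K by (simp add: card_Diff_subset finite_subset)
  finally show ?thesis .
qed

lemma prod_group:
  fixes f :: "nat \<Rightarrow> 'a::comm_monoid_mult"
  assumes "finite A" "\<And>a. a \<in> A \<Longrightarrow> c a \<le> m"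
  shows "(\<Prod>a\<in>A. f (c a)) = (\<Prod>k\<in>{0..m}. f k ^ card {a\<in>A. c a = k})"
  using assms
proof (induction A rule: finite_induct)
  case empty then show ?case by simp
next
  case (insert x F)
  have cx: "c x \<in> {0..m}" using insert by auto
  have "\<And>k. card {a\<in>insert x F. c a = k} = card {a\<in>F. c a = k} + (if c x = k then 1 else 0)"
  proof -
    fix k
    show "card {a\<in>insert x F. c a = k} = card {a\<in>F. c a = k} + (if c x = k then 1 else 0)"
    proof (cases "c x = k")
      case True
      then have "{a\<in>insert x F. c a = k} = insert x {a\<in>F. c a = k}" by auto
      then show ?thesis using True insert by simp
    next
      case False
      then have "{a\<in>insert x F. c a = k} = {a\<in>F. c a = k}" by auto
      then show ?thesis using False by simp
    qed
  qed
  then have "(\<Prod>k\<in>{0..m}. f k ^ card {a\<in>insert x F. c a = k})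
     = (\<Prod>k\<in>{0..m}. f k ^ card {a\<in>F. c a = k} * (if c x = k then f k else 1))"
    by (intro prod.cong refl) (simp add: power_add)
  also have "\<dots> = (\<Prod>k\<in>{0..m}. f k ^ card {a\<in>F. c a = k}) * (\<Prod>k\<in>{0..m}. if c x = k then f k else 1)"
    by (rule prod.distrib)
  also have "(\<Prod>k\<in>{0..m}. if c x = k then f k else 1) = f (c x)"
    using cx by (simp add: prod.delta)
  finally show ?case using insert by (simp add: mult.commute)
qed



definition Pn :: "nat \<Rightarrow> (nat \<Rightarrow> nat \<Rightarrow> nat) set" where
  "Pn n = PiE {..<n} (\<lambda>_. {p. p permutes {..<n}})"

definition matRC :: "nat \<Rightarrow> (nat \<Rightarrow> nat \<Rightarrow> nat) \<Rightarrow> (nat \<Rightarrow> nat \<Rightarrow> nat) \<Rightarrow> nat \<Rightarrow> nat \<Rightarrow> bool" where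
  "matRC n R C = (\<lambda>i j. i < n^2 \<and> j < n^2 \<and> R (i div n) (j div n) = i mod n \<and> C (j div n) (i div n) = j mod n)"

lemma idx:
  fixes a r n :: nat
  assumes "a < n" "r < n"
  shows "a*n+r < n^2" "(a*n+r) div n = a" "(a*n+r) mod n = r"
proof -
  have "a*n + r < a*n + n" using assms by simp
  also have "\<dots> = (a+1)*n" by simp
  also have "\<dots> \<le> n*n" using assms by (intro mult_right_mono) auto
  finally show "a*n+r < n^2" by (simp add: power2_eq_square)
  show "(a*n+r) div n = a" "(a*n+r) mod n = r" using assms by auto
qed

lemma idx_div: "i < n^2 \<Longrightarrow> i div (n::nat) < n"
  by (simp add: power2_eq_square less_mult_imp_div_less)

lemma idx_decomp: "i = (i div (n::nat)) * n + i mod n"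
  by simp

lemma block_div:
  fixes a i n :: nat
  assumes "a*n \<le> i" "i < a*n + n"
  shows "i div n = a" "i = a*n + i mod n"
proof -
  define r where "r = i - a*n"
  have i: "i = a*n + r" "r < n" using assms unfolding r_def by auto
  then show "i div n = a" "i = a*n + i mod n" by auto
qed

lemma Pn_perm: "R \<in> Pn n \<Longrightarrow> a < n \<Longrightarrow> R a permutes {..<n}"
  unfolding Pn_def by (auto simp: PiE_def Pi_def)

lemma perm_lt: "p permutes {..<n::nat} \<Longrightarrow> b < n \<Longrightarrow> p b < n"
  using permutes_in_image by fastforce

lemma perm_inj: "p permutes {..<n::nat} \<Longrightarrow> p b = p b' \<Longrightarrow> b = b'"
  using permutes_inj by (metis injD)

lemma perm_ex: "p permutes {..<n::nat} \<Longrightarrow> r < n \<Longrightarrow> \<exists>b<n. p b = r"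
  using permutes_image[of p "{..<n}"] by (metis imageE lessThan_iff)

lemma matRC_rows:
  assumes R: "R \<in> Pn n" and C: "C \<in> Pn n" and i: "i < n^2"
  shows "card {j. j < n^2 \<and> matRC n R C i j} = 1"
proof -
  define a where "a = i div n"
  have a: "a < n" using idx_div[OF i] a_def by simp
  have ra: "R a permutes {..<n}" using Pn_perm[OF R a] .
  have imn: "i mod n < n" using a by simp
  obtain b where b: "b < n" "R a b = i mod n" using perm_ex[OF ra imn] by blast
  have cb: "C b permutes {..<n}" using Pn_perm[OF C b(1)] .
  have c: "C b a < n" using perm_lt[OF cb a] .
  have "{j. j < n^2 \<and> matRC n R C i j} = {b*n + C b a}"
  proof safe
    fix j assume j: "j < n^2" "matRC n R C i j"
    have jd: "j div n < n" using idx_div[OF j(1)] .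
    have "R a (j div n) = i mod n" "C (j div n) a = j mod n" using j unfolding matRC_def a_def by auto
    then have jb: "j div n = b" using perm_inj[OF ra] b by metis
    then have "C b a = j mod n" using \<open>C (j div n) a = j mod n\<close> by simp
    then show "j = b*n + C b a" using idx_decomp[of j n] jb by simp
  next
    show "b*n + C b a < n^2" using idx[OF b(1) c] by simp
    show "matRC n R C i (b*n + C b a)" using idx[OF b(1) c] i b unfolding matRC_def a_def by simp
  qed
  then show ?thesis by simp
qed

lemma matRC_cols:
  assumes R: "R \<in> Pn n" and C: "C \<in> Pn n" and j: "j < n^2"
  shows "card {i. i < n^2 \<and> matRC n R C i j} = 1"
proof -
  define b where "b = j div n"
  have b: "b < n" using idx_div[OF j] b_def by simp
  have cb: "C b permutes {..<n}" using Pn_perm[OF C b] .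
  have jmn: "j mod n < n" using b by simp
  obtain a where a: "a < n" "C b a = j mod n" using perm_ex[OF cb jmn] by blast
  have ra: "R a permutes {..<n}" using Pn_perm[OF R a(1)] .
  have r: "R a b < n" using perm_lt[OF ra b] .
  have "{i. i < n^2 \<and> matRC n R C i j} = {a*n + R a b}"
  proof safe
    fix i assume i: "i < n^2" "matRC n R C i j"
    have "R (i div n) b = i mod n" "C b (i div n) = j mod n" using i unfolding matRC_def b_def by auto
    then have ia: "i div n = a" using perm_inj[OF cb] a by metis
    then have "R a b = i mod n" using \<open>R (i div n) b = i mod n\<close> by simp
    then show "i = a*n + R a b" using idx_decomp[of i n] ia by simp
  next
    show "a*n + R a b < n^2" using idx[OF a(1) r] by simp
    show "matRC n R C (a*n + R a b) j" using idx[OF a(1) r] j a unfolding matRC_def b_def by simp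
  qed
  then show ?thesis by simp
qed

lemma matRC_blocks:
  assumes R: "R \<in> Pn n" and C: "C \<in> Pn n" and a: "a < n" and b: "b < n"
  shows "card {(i,j). a*n \<le> i \<and> i < a*n + n \<and> b*n \<le> j \<and> j < b*n + n \<and> matRC n R C i j} = 1"
proof -
  have r: "R a b < n" using perm_lt[OF Pn_perm[OF R a] b] .
  have c: "C b a < n" using perm_lt[OF Pn_perm[OF C b] a] .
  have "{(i,j). a*n \<le> i \<and> i < a*n + n \<and> b*n \<le> j \<and> j < b*n + n \<and> matRC n R C i j}
        = {(a*n + R a b, b*n + C b a)}"
  proof safe
    fix i j assume h: "a*n \<le> i" "i < a*n + n" "b*n \<le> j" "j < b*n + n" "matRC n R C i j"
    have "i div n = a" "j div n = b" using block_div h by blast+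
    then have "R a b = i mod n" "C b a = j mod n" using h(5) unfolding matRC_def by auto
    then show "i = a*n + R a b" "j = b*n + C b a" using block_div h by metis+
  next
    show "matRC n R C (a*n + R a b) (b*n + C b a)" using idx[OF a r] idx[OF b c] unfolding matRC_def by simp
  qed (use r c in auto)
  then show ?thesis by simp
qed

lemma matRC_spm:
  assumes R: "R \<in> Pn n" and C: "C \<in> Pn n"
  shows "matRC n R C \<in> spm n"
  unfolding spm_def binmat_def
  using matRC_rows[OF R C] matRC_cols[OF R C] matRC_blocks[OF R C]
  by (auto simp: matRC_def)



lemma matRC_at:
  assumes "a < n" "b < n" "r < n" "c < n"
  shows "matRC n R C (a*n+r) (b*n+c) \<longleftrightarrow> R a b = r \<and> C b a = c"
  using idx[OF assms(1,3)] idx[OF assms(2,4)] unfolding matRC_def by simp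

lemma Pn_eqI:
  assumes R: "R \<in> Pn n" and R': "R' \<in> Pn n" and h: "\<And>a b. a < n \<Longrightarrow> b < n \<Longrightarrow> R a b = R' a b"
  shows "R = R'"
proof (rule ext, rule ext)
  fix a b
  show "R a b = R' a b"
  proof (cases "a < n")
    case True
    show ?thesis
    proof (cases "b < n")
      case True
      then show ?thesis using h \<open>a < n\<close> by simp
    next
      case False
      then show ?thesis using permutes_not_in[OF Pn_perm[OF R \<open>a<n\<close>]] permutes_not_in[OF Pn_perm[OF R' \<open>a<n\<close>]] by simp
    qed
  next
    case False
    have "R a = undefined" "R' a = undefined"
      using PiE_arb[OF R[unfolded Pn_def]] PiE_arb[OF R'[unfolded Pn_def]] False by auto
    then show ?thesis by simp
  qed
qed

lemma matRC_inj:
  assumes R: "R \<in> Pn n" and C: "C \<in> Pn n" and R': "R' \<in> Pn n" and C': "C' \<in> Pn n"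
    and eq: "matRC n R C = matRC n R' C'"
  shows "R = R' \<and> C = C'"
proof -
  have both: "R a b = R' a b \<and> C b a = C' b a" if a: "a < n" and b: "b < n" for a b
  proof -
    have r: "R a b < n" using perm_lt[OF Pn_perm[OF R a] b] .
    have c: "C b a < n" using perm_lt[OF Pn_perm[OF C b] a] .
    have "matRC n R C (a*n + R a b) (b*n + C b a)" using matRC_at[OF a b r c] by simp
    then have "matRC n R' C' (a*n + R a b) (b*n + C b a)" using eq by simp
    then show ?thesis using matRC_at[OF a b r c] by simp
  qed
  have "R = R'" by (rule Pn_eqI[OF R R']) (use both in blast)
  moreover have "C = C'" by (rule Pn_eqI[OF C C']) (use both in blast)
  ultimately show ?thesis by blast
qed

lemma matRC_disj:
  assumes R0: "R0 \<in> Pn n" and C0: "C0 \<in> Pn n" and R: "R \<in> Pn n" and C: "C \<in> Pn n"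
  shows "disjoint_mat (matRC n R0 C0) (matRC n R C) \<longleftrightarrow> (\<forall>a<n. \<forall>b<n. \<not> (R a b = R0 a b \<and> C b a = C0 b a))"
proof
  assume d: "disjoint_mat (matRC n R0 C0) (matRC n R C)"
  show "\<forall>a<n. \<forall>b<n. \<not> (R a b = R0 a b \<and> C b a = C0 b a)"
  proof (intro allI impI notI)
    fix a b assume a: "a < n" and b: "b < n" and e: "R a b = R0 a b \<and> C b a = C0 b a"
    have r: "R a b < n" using perm_lt[OF Pn_perm[OF R a] b] .
    have c: "C b a < n" using perm_lt[OF Pn_perm[OF C b] a] .
    have "matRC n R C (a*n + R a b) (b*n + C b a)" "matRC n R0 C0 (a*n + R a b) (b*n + C b a)"
      using matRC_at[OF a b r c] e by simp_all
    then show False using d unfolding disjoint_mat_def by blast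
  qed
next
  assume h: "\<forall>a<n. \<forall>b<n. \<not> (R a b = R0 a b \<and> C b a = C0 b a)"
  show "disjoint_mat (matRC n R0 C0) (matRC n R C)" unfolding disjoint_mat_def
  proof
    assume "\<exists>i j. matRC n R0 C0 i j \<and> matRC n R C i j"
    then obtain i j where ij: "matRC n R0 C0 i j" "matRC n R C i j" by blast
    then have "i < n^2" "j < n^2" unfolding matRC_def by auto
    then have "i div n < n" "j div n < n" using idx_div by auto
    then have "\<not> (R (i div n) (j div n) = R0 (i div n) (j div n) \<and> C (j div n) (i div n) = C0 (j div n) (i div n))"
      using h by blast
    then show False using ij unfolding matRC_def by simp
  qed
qed

definition blk :: "(nat \<Rightarrow> nat \<Rightarrow> bool) \<Rightarrow> nat \<Rightarrow> nat \<Rightarrow> nat \<Rightarrow> (nat \<times> nat) set" where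
  "blk M n a b = {(i,j). a*n \<le> i \<and> i < a*n + n \<and> b*n \<le> j \<and> j < b*n + n \<and> M i j}"

definition pos :: "(nat \<Rightarrow> nat \<Rightarrow> bool) \<Rightarrow> nat \<Rightarrow> nat \<Rightarrow> nat \<Rightarrow> nat \<times> nat" where
  "pos M n a b = (THE p. blk M n a b = {p})"

lemma pos_blk:
  assumes M: "M \<in> spm n" and a: "a < n" and b: "b < n"
  shows "blk M n a b = {pos M n a b}"
proof -
  have "card (blk M n a b) = 1" using M a b unfolding spm_def blk_def by blast
  then obtain p where p: "blk M n a b = {p}" using card_1_singletonE by blast
  have "pos M n a b = p" unfolding pos_def using p by (intro the_equality) auto
  then show ?thesis using p by simp
qed

lemma spm_bound: "M \<in> spm n \<Longrightarrow> M i j \<Longrightarrow> i < n^2 \<and> j < n^2"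
  unfolding spm_def binmat_def by blast

lemma spm_row_unique:
  assumes M: "M \<in> spm n" and "M i j" "M i j'"
  shows "j = j'"
proof -
  have i: "i < n^2" using spm_bound[OF M assms(2)] by simp
  have "card {j. j < n^2 \<and> M i j} = 1" using M i unfolding spm_def by blast
  then obtain x where x: "{j. j < n^2 \<and> M i j} = {x}" using card_1_singletonE by blast
  have "j \<in> {j. j < n^2 \<and> M i j}" "j' \<in> {j. j < n^2 \<and> M i j}" using assms spm_bound[OF M] by auto
  then show ?thesis using x by auto
qed

lemma spm_col_unique:
  assumes M: "M \<in> spm n" and "M i j" "M i' j"
  shows "i = i'"
proof -
  have j: "j < n^2" using spm_bound[OF M assms(2)] by simp
  have "card {i. i < n^2 \<and> M i j} = 1" using M j unfolding spm_def by blast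
  then obtain x where x: "{i. i < n^2 \<and> M i j} = {x}" using card_1_singletonE by blast
  have "i \<in> {i. i < n^2 \<and> M i j}" "i' \<in> {i. i < n^2 \<and> M i j}" using assms spm_bound[OF M] by auto
  then show ?thesis using x by auto
qed

lemma inj_perm:
  assumes "\<And>b. b < n \<Longrightarrow> p b < (n::nat)" "\<And>b. \<not> b < n \<Longrightarrow> p b = b"
    "\<And>b b'. b < n \<Longrightarrow> b' < n \<Longrightarrow> p b = p b' \<Longrightarrow> b = b'"
  shows "p permutes {..<n}"
proof (rule bij_imp_permutes)
  have inj: "inj_on p {..<n}" using assms(3) by (auto simp: inj_on_def)
  have "p ` {..<n} \<subseteq> {..<n}" using assms(1) by auto
  then have "p ` {..<n} = {..<n}" using endo_inj_surj[OF _ _ inj] by auto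
  then show "bij_betw p {..<n} {..<n}" using inj by (simp add: bij_betw_def)
  show "\<And>x. x \<notin> {..<n} \<Longrightarrow> p x = x" using assms(2) by auto
qed

lemma matRC_surj:
  assumes M: "M \<in> spm n"
  shows "\<exists>R\<in>Pn n. \<exists>C\<in>Pn n. M = matRC n R C"
proof -
  define R where "R = (\<lambda>a\<in>{..<n}. \<lambda>b. if b < n then fst (pos M n a b) mod n else b)"
  define C where "C = (\<lambda>b\<in>{..<n}. \<lambda>a. if a < n then snd (pos M n a b) mod n else a)"
  have posP: "a*n \<le> fst (pos M n a b) \<and> fst (pos M n a b) < a*n + n \<and> b*n \<le> snd (pos M n a b)
      \<and> snd (pos M n a b) < b*n + n \<and> M (fst (pos M n a b)) (snd (pos M n a b))" if "a < n" "b < n" for a b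
  proof -
    have "pos M n a b \<in> blk M n a b" using pos_blk[OF M that] by simp
    then show ?thesis unfolding blk_def by (cases "pos M n a b") auto
  qed
  have posD: "fst (pos M n a b) div n = a" "snd (pos M n a b) div n = b"
     "fst (pos M n a b) = a*n + fst (pos M n a b) mod n" "snd (pos M n a b) = b*n + snd (pos M n a b) mod n"
     if ab: "a < n" "b < n" for a b
  proof -
    note P = posP[OF ab]
    show "fst (pos M n a b) div n = a" by (rule block_div(1)) (use P in auto)
    show "snd (pos M n a b) div n = b" by (rule block_div(1)) (use P in auto)
    show "fst (pos M n a b) = a*n + fst (pos M n a b) mod n" by (rule block_div(2)) (use P in auto)
    show "snd (pos M n a b) = b*n + snd (pos M n a b) mod n" by (rule block_div(2)) (use P in auto)
  qed
  have posU: "pos M n a b = (i, j)" if "a < n" "b < n" "a*n \<le> i" "i < a*n + n" "b*n \<le> j" "j < b*n + n" "M i j" for a b i j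
  proof -
    have "(i,j) \<in> blk M n a b" using that unfolding blk_def by simp
    then show ?thesis using pos_blk[OF M that(1,2)] by simp
  qed
  have Rperm: "R a permutes {..<n}" if a: "a < n" for a
  proof (rule inj_perm)
    show "\<And>b. b < n \<Longrightarrow> R a b < n" using a unfolding R_def by simp
    show "\<And>b. \<not> b < n \<Longrightarrow> R a b = b" using a unfolding R_def by simp
    fix b b' assume b: "b < n" and b': "b' < n" and e: "R a b = R a b'"
    let ?i = "fst (pos M n a b)" and ?j = "snd (pos M n a b)"
    let ?i' = "fst (pos M n a b')" and ?j' = "snd (pos M n a b')"
    have "?i mod n = ?i' mod n" using e a b b' unfolding R_def by simp
    moreover note posD(3)[OF a b] posD(3)[OF a b']
    ultimately have ii: "?i = ?i'" by linarith
    have m1: "M ?i ?j" using posP[OF a b] by blast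
    have "M ?i' ?j'" using posP[OF a b'] by blast
    then have m2: "M ?i ?j'" using ii by simp
    note m1 m2
    then have jj: "?j = ?j'" by (rule spm_row_unique[OF M])
    have "b = ?j div n" using posD(2)[OF a b] by simp
    also have "\<dots> = ?j' div n" using jj by simp
    also have "\<dots> = b'" using posD(2)[OF a b'] by simp
    finally show "b = b'" .
  qed
  have Cperm: "C b permutes {..<n}" if b: "b < n" for b
  proof (rule inj_perm)
    show "\<And>a. a < n \<Longrightarrow> C b a < n" using b unfolding C_def by simp
    show "\<And>a. \<not> a < n \<Longrightarrow> C b a = a" using b unfolding C_def by simp
    fix a a' assume a: "a < n" and a': "a' < n" and e: "C b a = C b a'"
    let ?i = "fst (pos M n a b)" and ?j = "snd (pos M n a b)"
    let ?i' = "fst (pos M n a' b)" and ?j' = "snd (pos M n a' b)"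
    have "?j mod n = ?j' mod n" using e a a' b unfolding C_def by simp
    moreover note posD(4)[OF a b] posD(4)[OF a' b]
    ultimately have jj: "?j = ?j'" by linarith
    have m1: "M ?i ?j" using posP[OF a b] by blast
    have "M ?i' ?j'" using posP[OF a' b] by blast
    then have m2: "M ?i' ?j" using jj by simp
    note m1 m2
    then have ii: "?i = ?i'" by (rule spm_col_unique[OF M])
    have "a = ?i div n" using posD(1)[OF a b] by simp
    also have "\<dots> = ?i' div n" using ii by simp
    also have "\<dots> = a'" using posD(1)[OF a' b] by simp
    finally show "a = a'" .
  qed
  have RP: "R \<in> Pn n" unfolding Pn_def using Rperm by (auto simp: R_def)
  have CP: "C \<in> Pn n" unfolding Pn_def using Cperm by (auto simp: C_def)
  have "M = matRC n R C"
  proof (rule ext, rule ext)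
    fix i j
    show "M i j = matRC n R C i j"
    proof
      assume Mij: "M i j"
      have ij: "i < n^2" "j < n^2" using spm_bound[OF M Mij] by auto
      define a where "a = i div n"
      define b where "b = j div n"
      have a: "a < n" and b: "b < n" using idx_div ij a_def b_def by auto
      have "i = a*n + i mod n" "j = b*n + j mod n" using a_def b_def by simp_all
      moreover have "i mod n < n" "j mod n < n" using a by auto
      ultimately have bi: "a*n \<le> i" "i < a*n + n" "b*n \<le> j" "j < b*n + n" by linarith+
      have "pos M n a b = (i,j)" using posU[OF a b bi Mij] .
      then have "R a b = i mod n" "C b a = j mod n" using a b unfolding R_def C_def by simp_all
      then show "matRC n R C i j" using ij unfolding matRC_def a_def b_def by simp
    next
      assume m: "matRC n R C i j"
      have ij: "i < n^2" "j < n^2" using m unfolding matRC_def by auto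
      define a where "a = i div n"
      define b where "b = j div n"
      have a: "a < n" and b: "b < n" using idx_div ij a_def b_def by auto
      have "R a b = i mod n" "C b a = j mod n" using m unfolding matRC_def a_def b_def by auto
      then have e1: "fst (pos M n a b) mod n = i mod n" "snd (pos M n a b) mod n = j mod n"
        using a b unfolding R_def C_def by simp_all
      have "fst (pos M n a b) = a*n + fst (pos M n a b) mod n" "snd (pos M n a b) = b*n + snd (pos M n a b) mod n"
        using posD(3,4)[OF a b] by blast+
      moreover have "i = a*n + i mod n" "j = b*n + j mod n" using a_def b_def by simp_all
      ultimately have "fst (pos M n a b) = i" "snd (pos M n a b) = j"
        using e1 by linarith+
      then show "M i j" using posP[OF a b] by simp
    qed
  qed
  then show ?thesis using RP CP by blast
qed

lemma matRC_bij: "bij_betw (\<lambda>(R,C). matRC n R C) (Pn n \<times> Pn n) (spm n)"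
  unfolding bij_betw_def
proof
  show "inj_on (\<lambda>(R,C). matRC n R C) (Pn n \<times> Pn n)"
    using matRC_inj by (auto simp: inj_on_def)
  show "(\<lambda>(R,C). matRC n R C) ` (Pn n \<times> Pn n) = spm n"
    using matRC_spm matRC_surj by fastforce
qed



lemma card_Pn: "card (Pn n) = fact n ^ n"
proof -
  have "card (Pn n) = (\<Prod>a\<in>{..<n}. card {p. p permutes {..<n::nat}})"
    unfolding Pn_def by (rule card_PiE) simp
  also have "card {p. p permutes {..<n::nat}} = fact n" by (rule card_permutations) auto
  finally show ?thesis by simp
qed

lemma finite_Pn: "finite (Pn n)"
  unfolding Pn_def by (rule finite_PiE) (auto intro: finite_permutations)

lemma card_Pn_restr:
  assumes Q: "Q \<in> Pn n" and S: "S \<subseteq> {..<n} \<times> {..<n}"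
  shows "card {R\<in>Pn n. \<forall>(a,b)\<in>S. R a b = Q a b} = (\<Prod>a<n. fact (n - card {b. (a,b)\<in>S}))"
proof -
  have eq: "{R\<in>Pn n. \<forall>(a,b)\<in>S. R a b = Q a b}
       = PiE {..<n} (\<lambda>a. {p. p permutes {..<n} \<and> (\<forall>b\<in>{b. (a,b)\<in>S}. p b = Q a b)})"
    using S unfolding Pn_def by (auto simp: PiE_def Pi_def)
  have "card {R\<in>Pn n. \<forall>(a,b)\<in>S. R a b = Q a b}
     = (\<Prod>a<n. card {p. p permutes {..<n} \<and> (\<forall>b\<in>{b. (a,b)\<in>S}. p b = Q a b)})"
    unfolding eq by (rule card_PiE) simp
  also have "\<dots> = (\<Prod>a<n. fact (n - card {b. (a,b)\<in>S}))"
  proof (rule prod.cong[OF refl])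
    fix a assume a: "a \<in> {..<n}"
    show "card {p. p permutes {..<n} \<and> (\<forall>b\<in>{b. (a,b)\<in>S}. p b = Q a b)} = fact (n - card {b. (a,b)\<in>S})"
      by (rule card_perm_ext[OF Pn_perm[OF Q]]) (use a S in auto)
  qed
  finally show ?thesis .
qed

definition Fn :: "nat \<Rightarrow> (nat \<times> nat) set \<Rightarrow> nat" where
  "Fn n S = (\<Prod>a<n. fact (n - card {b. (a,b)\<in>S})) * (\<Prod>b<n. fact (n - card {a. (a,b)\<in>S}))"

lemma card_G:
  assumes R0: "R0 \<in> Pn n" and C0: "C0 \<in> Pn n" and S: "S \<subseteq> {..<n} \<times> {..<n}"
  shows "card {x\<in>Pn n \<times> Pn n. S \<subseteq> {(a,b)\<in>{..<n}\<times>{..<n}. fst x a b = R0 a b \<and> snd x b a = C0 b a}} = Fn n S"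
proof -
  let ?S' = "{(b,a). (a,b) \<in> S}"
  have S': "?S' \<subseteq> {..<n} \<times> {..<n}" using S by auto
  have "{x\<in>Pn n \<times> Pn n. S \<subseteq> {(a,b)\<in>{..<n}\<times>{..<n}. fst x a b = R0 a b \<and> snd x b a = C0 b a}}
     = {R\<in>Pn n. \<forall>(a,b)\<in>S. R a b = R0 a b} \<times> {C\<in>Pn n. \<forall>(b,a)\<in>?S'. C b a = C0 b a}"
    using S by auto
  then have "card {x\<in>Pn n \<times> Pn n. S \<subseteq> {(a,b)\<in>{..<n}\<times>{..<n}. fst x a b = R0 a b \<and> snd x b a = C0 b a}}
     = card {R\<in>Pn n. \<forall>(a,b)\<in>S. R a b = R0 a b} * card {C\<in>Pn n. \<forall>(b,a)\<in>?S'. C b a = C0 b a}"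
    by (simp add: card_cartesian_product)
  also have "\<dots> = (\<Prod>a<n. fact (n - card {b. (a,b)\<in>S})) * (\<Prod>b<n. fact (n - card {a. (b,a)\<in>?S'}))"
    using card_Pn_restr[OF R0 S] card_Pn_restr[OF C0 S'] by simp
  also have "\<dots> = Fn n S" unfolding Fn_def by simp
  finally show ?thesis .
qed

lemma d_formula:
  assumes R0: "R0 \<in> Pn n" and C0: "C0 \<in> Pn n"
  shows "int (card {B\<in>spm n. disjoint_mat (matRC n R0 C0) B})
       = (\<Sum>S\<in>Pow ({..<n}\<times>{..<n}). (-1) ^ card S * int (Fn n S))"
proof -
  let ?U = "{..<n}\<times>{..<n}"
  let ?E = "\<lambda>x. {(a,b)\<in>?U. fst x a b = R0 a b \<and> snd x b a = C0 b a}"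
  let ?X = "Pn n \<times> Pn n"
  have sub1: "{B\<in>spm n. disjoint_mat (matRC n R0 C0) B} \<subseteq> (\<lambda>(R,C). matRC n R C) ` {x\<in>?X. ?E x = {}}"
  proof
    fix B assume "B \<in> {B\<in>spm n. disjoint_mat (matRC n R0 C0) B}"
    then have B: "B \<in> spm n" "disjoint_mat (matRC n R0 C0) B" by auto
    obtain R C where RC: "R \<in> Pn n" "C \<in> Pn n" "B = matRC n R C" using matRC_surj[OF B(1)] by blast
    have "?E (R,C) = {}" using B(2) RC matRC_disj[OF R0 C0 RC(1,2)] by auto
    then show "B \<in> (\<lambda>(R,C). matRC n R C) ` {x\<in>?X. ?E x = {}}" using RC by force
  qed
  have sub2: "(\<lambda>(R,C). matRC n R C) ` {x\<in>?X. ?E x = {}} \<subseteq> {B\<in>spm n. disjoint_mat (matRC n R0 C0) B}"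
  proof (rule image_subsetI)
    fix x assume x: "x \<in> {x\<in>?X. ?E x = {}}"
    obtain R C where xRC: "x = (R,C)" by (cases x)
    have RC: "R \<in> Pn n" "C \<in> Pn n" "?E (R,C) = {}" using x xRC by auto
    have "matRC n R C \<in> spm n" using matRC_spm[OF RC(1,2)] .
    moreover have "disjoint_mat (matRC n R0 C0) (matRC n R C)"
      using matRC_disj[OF R0 C0 RC(1,2)] RC(3) by auto
    ultimately show "(\<lambda>(R,C). matRC n R C) x \<in> {B\<in>spm n. disjoint_mat (matRC n R0 C0) B}"
      using xRC by simp
  qed
  have "{B\<in>spm n. disjoint_mat (matRC n R0 C0) B} = (\<lambda>(R,C). matRC n R C) ` {x\<in>?X. ?E x = {}}"
    using sub1 sub2 by (rule subset_antisym)
  moreover have "inj_on (\<lambda>(R,C). matRC n R C) {x\<in>?X. ?E x = {}}"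
    using matRC_inj by (auto simp: inj_on_def)
  ultimately have "card {B\<in>spm n. disjoint_mat (matRC n R0 C0) B} = card {x\<in>?X. ?E x = {}}"
    by (simp add: card_image)
  then have "int (card {B\<in>spm n. disjoint_mat (matRC n R0 C0) B}) =
      (\<Sum>S\<in>Pow ?U. (-1) ^ card S * int (card {x\<in>?X. S \<subseteq> ?E x}))"
    using incl_excl[of ?X ?U ?E] finite_Pn by auto
  also have "\<dots> = (\<Sum>S\<in>Pow ?U. (-1) ^ card S * int (Fn n S))"
    by (rule sum.cong[OF refl]) (use card_G[OF R0 C0] in auto)
  finally show ?thesis .
qed



lemma perm_card:
  assumes s: "\<sigma> permutes {..<n::nat}"
  shows "card {i. i < n \<and> P (\<sigma> i)} = card {i. i < n \<and> P i}"
proof -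
  have img: "\<sigma> ` {i. i < n \<and> P (\<sigma> i)} = {i. i < n \<and> P i}"
  proof safe
    fix i assume "i < n" "P (\<sigma> i)"
    then show "\<sigma> i < n" using permutes_in_image[OF s] by auto
  next
    fix i assume i: "i < n" "P i"
    have e: "\<sigma> (inv \<sigma> i) = i" using permutes_inverses(1)[OF s] by simp
    have l: "inv \<sigma> i < n" using permutes_in_image[OF permutes_inv[OF s]] i by auto
    show "i \<in> \<sigma> ` {i. i < n \<and> P (\<sigma> i)}"
      by (rule image_eqI[of _ _ "inv \<sigma> i"]) (use e l i in auto)
  qed
  have inj: "inj_on \<sigma> {i. i < n \<and> P (\<sigma> i)}" by (rule inj_on_subset[OF permutes_inj[OF s]]) simp
  have "card (\<sigma> ` {i. i < n \<and> P (\<sigma> i)}) = card {i. i < n \<and> P (\<sigma> i)}" by (rule card_image[OF inj])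
  then show ?thesis using img by simp
qed

lemma perm_card2:
  assumes s: "\<sigma> permutes {..<n::nat}"
  shows "card {(i,j). i < n \<and> j < n \<and> P (\<sigma> i) j} = card {(i,j). i < n \<and> j < n \<and> P i j}"
proof -
  define f where "f = (\<lambda>(i::nat,j::nat). (\<sigma> i, j))"
  have img1: "f ` {(i,j). i < n \<and> j < n \<and> P (\<sigma> i) j} \<subseteq> {(i,j). i < n \<and> j < n \<and> P i j}"
  proof (rule image_subsetI)
    fix x assume "x \<in> {(i,j). i < n \<and> j < n \<and> P (\<sigma> i) j}"
    then show "f x \<in> {(i,j). i < n \<and> j < n \<and> P i j}"
      using permutes_in_image[OF s] by (cases x) (auto simp: f_def)
  qed
  have img2: "{(i,j). i < n \<and> j < n \<and> P i j} \<subseteq> f ` {(i,j). i < n \<and> j < n \<and> P (\<sigma> i) j}"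
  proof (rule subsetI)
    fix x assume x: "x \<in> {(i,j). i < n \<and> j < n \<and> P i j}"
    obtain i j where ij: "x = (i,j)" by (cases x)
    have i: "i < n" "j < n" "P i j" using x ij by auto
    have e: "\<sigma> (inv \<sigma> i) = i" using permutes_inverses(1)[OF s] by simp
    have l: "inv \<sigma> i < n" using permutes_in_image[OF permutes_inv[OF s]] i by auto
    show "x \<in> f ` {(i,j). i < n \<and> j < n \<and> P (\<sigma> i) j}"
      by (rule image_eqI[of _ _ "(inv \<sigma> i, j)"]) (use e l i ij in \<open>auto simp: f_def\<close>)
  qed
  have img: "f ` {(i,j). i < n \<and> j < n \<and> P (\<sigma> i) j} = {(i,j). i < n \<and> j < n \<and> P i j}"
    using img1 img2 by (rule subset_antisym)
  have inj: "inj_on f {(i,j). i < n \<and> j < n \<and> P (\<sigma> i) j}"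
  proof (rule inj_onI)
    fix x y assume "x \<in> {(i,j). i < n \<and> j < n \<and> P (\<sigma> i) j}" "y \<in> {(i,j). i < n \<and> j < n \<and> P (\<sigma> i) j}" "f x = f y"
    then show "x = y" using injD[OF permutes_inj[OF s]] by (cases x, cases y) (auto simp: f_def)
  qed
  have "card (f ` {(i,j). i < n \<and> j < n \<and> P (\<sigma> i) j}) = card {(i,j). i < n \<and> j < n \<and> P (\<sigma> i) j}"
    by (rule card_image[OF inj])
  then show ?thesis using img by simp
qed

lemma row_equiv_inv:
  assumes "(A, B) \<in> row_equiv n"
  shows "eps n B = eps n A" "psi n k B = psi n k A"
proof -
  obtain \<sigma> where s: "\<sigma> permutes {..<n}" and B: "B = (\<lambda>i j. A (\<sigma> i) j)"
    using assms unfolding row_equiv_def by auto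
  show "eps n B = eps n A" unfolding eps_def B using perm_card2[OF s] by simp
  have "rk n k B = rk n k A" unfolding rk_def B
    using perm_card[OF s, of "\<lambda>i. card {j. j < n \<and> A i j} = k"] by simp
  moreover have "ck n k B = ck n k A"
  proof -
    have "card {i. i < n \<and> A (\<sigma> i) j} = card {i. i < n \<and> A i j}" for j
      using perm_card[OF s, of "\<lambda>i. A i j"] by simp
    then show ?thesis unfolding ck_def B by simp
  qed
  ultimately show "psi n k B = psi n k A" unfolding psi_def by simp
qed

lemma row_equiv_equiv: "equiv (binmat n) (row_equiv n)"
proof (rule equivI)
  show "row_equiv n \<subseteq> binmat n \<times> binmat n" unfolding row_equiv_def by auto
  show "refl_on (binmat n) (row_equiv n)" unfolding refl_on_def row_equiv_def
    using permutes_id by fastforce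
  show "sym (row_equiv n)" unfolding sym_def
  proof clarify
    fix A B assume "(A, B) \<in> row_equiv n"
    then obtain \<sigma> where s: "\<sigma> permutes {..<n}" and B: "B = (\<lambda>i j. A (\<sigma> i) j)" and AB: "A \<in> binmat n" "B \<in> binmat n"
      unfolding row_equiv_def by auto
    have "A = (\<lambda>i j. B (inv \<sigma> i) j)" using B permutes_inverses(1)[OF s] by auto
    then show "(B, A) \<in> row_equiv n" unfolding row_equiv_def using AB permutes_inv[OF s] by blast
  qed
  show "trans (row_equiv n)" unfolding trans_def
  proof clarify
    fix A B C assume "(A, B) \<in> row_equiv n" "(B, C) \<in> row_equiv n"
    then obtain \<sigma> \<tau> where s: "\<sigma> permutes {..<n}" "\<tau> permutes {..<n}" and B: "B = (\<lambda>i j. A (\<sigma> i) j)"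
      and C: "C = (\<lambda>i j. B (\<tau> i) j)" and AC: "A \<in> binmat n" "C \<in> binmat n"
      unfolding row_equiv_def by auto
    have "C = (\<lambda>i j. A ((\<sigma> \<circ> \<tau>) i) j)" using B C by auto
    then show "(A, C) \<in> row_equiv n" unfolding row_equiv_def using AC permutes_compose[OF s(2,1)] by blast
  qed
qed

lemma rep_in: "X \<noteq> {} \<Longrightarrow> rep X \<in> X"
  unfolding rep_def by (metis ex_in_conv someI_ex)

lemma class_sum:
  fixes f :: "'a \<Rightarrow> int"
  assumes eq: "equiv A r" and fin: "finite A"
    and inv: "\<And>x y. (x,y) \<in> r \<Longrightarrow> f x = f y" "\<And>x y. (x,y) \<in> r \<Longrightarrow> P x = P y"
  shows "(\<Sum>x\<in>{x\<in>A. P x}. f x) = (\<Sum>X\<in>{X\<in>A//r. P (SOME a. a \<in> X)}. int (card X) * f (SOME a. a \<in> X))"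
proof -
  let ?rep = "\<lambda>X. SOME a. a \<in> X"
  let ?Q = "{X\<in>A//r. P (?rep X)}"
  have repX: "?rep X \<in> X" if "X \<in> A//r" for X
    using in_quotient_imp_non_empty[OF eq that] by (metis ex_in_conv someI_ex)
  have U: "{x\<in>A. P x} = \<Union> ?Q"
  proof safe
    fix x assume x: "x \<in> A" "P x"
    have X: "r``{x} \<in> A//r" using x(1) by (rule quotientI)
    have xX: "x \<in> r``{x}" by (rule equiv_class_self[OF eq x(1)])
    have rr: "(?rep (r``{x}), x) \<in> r" by (rule in_quotient_imp_in_rel[OF eq X]) (use repX[OF X] xX in blast)
    have "P (?rep (r``{x}))" using inv(2)[OF rr] x(2) by simp
    then show "x \<in> \<Union> ?Q" using X xX by blast
  next
    fix x X assume "x \<in> X" "X \<in> A//r" "P (?rep X)"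
    then show "x \<in> A" using in_quotient_imp_subset[OF eq] by blast
  next
    fix x X assume x: "x \<in> X" "X \<in> A//r" "P (?rep X)"
    have rr: "(?rep X, x) \<in> r" by (rule in_quotient_imp_in_rel[OF eq x(2)]) (use repX[OF x(2)] x(1) in blast)
    show "P x" using inv(2)[OF rr] x(3) by simp
  qed
  have finQ: "finite (A//r)" using fin eq by (intro finite_quotient) (auto simp: equiv_def)
  have finX: "finite X" if "X \<in> A//r" for X by (rule finite_subset[OF in_quotient_imp_subset[OF eq that] fin])
  have "(\<Sum>x\<in>{x\<in>A. P x}. f x) = (\<Sum>X\<in>?Q. \<Sum>x\<in>X. f x)"
    unfolding U
  proof -
    have "\<forall>X\<in>?Q. finite X" using finX by blast
    moreover have "\<forall>X\<in>?Q. \<forall>Y\<in>?Q. X \<noteq> Y \<longrightarrow> X \<inter> Y = {}" using quotient_disj[OF eq] by blast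
    ultimately show "sum f (\<Union> ?Q) = (\<Sum>X\<in>?Q. \<Sum>x\<in>X. f x)"
      using sum.Union_disjoint[of ?Q f] by (simp add: comp_def)
  qed
  also have "\<dots> = (\<Sum>X\<in>?Q. int (card X) * f (?rep X))"
  proof (rule sum.cong[OF refl])
    fix X assume X: "X \<in> ?Q"
    then have XA: "X \<in> A//r" by simp
    have "(\<Sum>x\<in>X. f x) = (\<Sum>x\<in>X. f (?rep X))"
    proof (rule sum.cong[OF refl])
      fix x assume "x \<in> X"
      then have rr: "(?rep X, x) \<in> r" using repX[OF XA] by (intro in_quotient_imp_in_rel[OF eq XA]) blast
      show "f x = f (?rep X)" using inv(1)[OF rr] by simp
    qed
    then show "(\<Sum>x\<in>X. f x) = int (card X) * f (?rep X)" by simp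
  qed
  finally show ?thesis .
qed



definition toM :: "(nat \<times> nat) set \<Rightarrow> nat \<Rightarrow> nat \<Rightarrow> bool" where
  "toM S = (\<lambda>i j. (i,j) \<in> S)"

lemma eps_toM:
  assumes "S \<subseteq> {..<n} \<times> {..<n}"
  shows "eps n (toM S) = card S"
proof -
  have "{(i,j). i < n \<and> j < n \<and> toM S i j} = S" using assms unfolding toM_def by auto
  then show ?thesis unfolding eps_def by simp
qed

lemma rowprod:
  assumes S: "S \<subseteq> {..<n} \<times> {..<n}"
  shows "(\<Prod>a<n. fact (n - card {b. (a,b)\<in>S})) = (\<Prod>k\<in>{0..n}. fact (n-k) ^ rk n k (toM S))"
proof -
  have c: "card {b. (a,b)\<in>S} \<le> n" for a
  proof -
    have "{b. (a,b)\<in>S} \<subseteq> {..<n}" using S by auto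
    then show ?thesis by (metis card_lessThan card_mono finite_lessThan)
  qed
  have "(\<Prod>a<n. fact (n - card {b. (a,b)\<in>S})) = (\<Prod>k\<in>{0..n}. fact (n-k) ^ card {a\<in>{..<n}. card {b. (a,b)\<in>S} = k})"
    by (rule prod_group[where f="\<lambda>k. fact (n - k)"]) (use c in auto)
  also have "\<dots> = (\<Prod>k\<in>{0..n}. fact (n-k) ^ rk n k (toM S))"
  proof (rule prod.cong[OF refl])
    fix k
    have "\<And>a. {j. j < n \<and> toM S a j} = {b. (a,b)\<in>S}" using S unfolding toM_def by auto
    then have "{a\<in>{..<n}. card {b. (a,b)\<in>S} = k} = {i. i < n \<and> card {j. j < n \<and> toM S i j} = k}" by auto
    then show "fact (n-k) ^ card {a\<in>{..<n}. card {b. (a,b)\<in>S} = k} = fact (n-k) ^ rk n k (toM S)"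
      unfolding rk_def by simp
  qed
  finally show ?thesis .
qed

lemma colprod:
  assumes S: "S \<subseteq> {..<n} \<times> {..<n}"
  shows "(\<Prod>b<n. fact (n - card {a. (a,b)\<in>S})) = (\<Prod>k\<in>{0..n}. fact (n-k) ^ ck n k (toM S))"
proof -
  have c: "card {a. (a,b)\<in>S} \<le> n" for b
  proof -
    have "{a. (a,b)\<in>S} \<subseteq> {..<n}" using S by auto
    then show ?thesis by (metis card_lessThan card_mono finite_lessThan)
  qed
  have "(\<Prod>b<n. fact (n - card {a. (a,b)\<in>S})) = (\<Prod>k\<in>{0..n}. fact (n-k) ^ card {b\<in>{..<n}. card {a. (a,b)\<in>S} = k})"
    by (rule prod_group[where f="\<lambda>k. fact (n - k)"]) (use c in auto)
  also have "\<dots> = (\<Prod>k\<in>{0..n}. fact (n-k) ^ ck n k (toM S))"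
  proof (rule prod.cong[OF refl])
    fix k
    have "\<And>b. {i. i < n \<and> toM S i b} = {a. (a,b)\<in>S}" using S unfolding toM_def by auto
    then have "{b\<in>{..<n}. card {a. (a,b)\<in>S} = k} = {j. j < n \<and> card {i. i < n \<and> toM S i j} = k}" by auto
    then show "fact (n-k) ^ card {b\<in>{..<n}. card {a. (a,b)\<in>S} = k} = fact (n-k) ^ ck n k (toM S)"
      unfolding ck_def by simp
  qed
  finally show ?thesis .
qed

lemma Fn_psi:
  assumes S: "S \<subseteq> {..<n} \<times> {..<n}" and n: "n \<ge> 2"
  shows "Fn n S = (\<Prod>i\<in>{0..n-2}. fact (n-i) ^ psi n i (toM S))"
proof -
  have "Fn n S = (\<Prod>k\<in>{0..n}. fact (n-k) ^ rk n k (toM S)) * (\<Prod>k\<in>{0..n}. fact (n-k) ^ ck n k (toM S))"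
    unfolding Fn_def rowprod[OF S] colprod[OF S] ..
  also have "\<dots> = (\<Prod>k\<in>{0..n}. fact (n-k) ^ psi n k (toM S))"
    unfolding psi_def power_add prod.distrib ..
  also have "\<dots> = (\<Prod>k\<in>{0..n-2}. fact (n-k) ^ psi n k (toM S))"
  proof (rule prod.mono_neutral_right)
    show "finite {0..n}" by simp
    show "{0..n-2} \<subseteq> {0..n}" by auto
    show "\<forall>i\<in>{0..n} - {0..n-2}. fact (n-i) ^ psi n i (toM S) = (1::nat)"
    proof
      fix i assume "i \<in> {0..n} - {0..n-2}"
      then have "n - i \<le> 1" by auto
      then have "fact (n - i) = (1::nat)" by (metis fact_0 fact_1 le_Suc_eq le_zero_eq One_nat_def)
      then show "fact (n-i) ^ psi n i (toM S) = (1::nat)" by simp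
    qed
  qed
  finally show ?thesis .
qed

lemma prod_single:
  assumes "a0 < (n::nat)"
  shows "(\<Prod>a<n. fact (n - card {b. (a,b) \<in> {(a0,b0)}})) = (fact (n-1) * fact n ^ (n-1) :: nat)"
proof -
  have "(\<Prod>a<n. fact (n - card {b. (a,b) \<in> {(a0,b0)}})) = (\<Prod>a<n. if a = a0 then fact (n-1) else fact n :: nat)"
  proof (rule prod.cong[OF refl])
    fix a
    show "fact (n - card {b. (a,b) \<in> {(a0,b0)}}) = (if a = a0 then fact (n-1) else fact n :: nat)"
    proof (cases "a = a0")
      case True
      then have "{b. (a,b) \<in> {(a0,b0)}} = {b0}" by auto
      then show ?thesis using True by simp
    next
      case False
      then have "{b. (a,b) \<in> {(a0,b0)}} = {}" by auto
      then show ?thesis using False by simp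
    qed
  qed
  also have "\<dots> = fact (n-1) * (\<Prod>a\<in>{..<n} - {a0}. if a = a0 then fact (n-1) else fact n)"
    using assms by (subst prod.remove[of _ a0]) auto
  also have "(\<Prod>a\<in>{..<n} - {a0}. if a = a0 then fact (n-1) else fact n) = (\<Prod>a\<in>{..<n} - {a0}. fact n :: nat)"
    by (rule prod.cong) auto
  also have "\<dots> = fact n ^ (n-1)" using assms by simp
  finally show ?thesis .
qed

lemma Fn_empty: "Fn n {} = fact n ^ n * fact n ^ n"
  unfolding Fn_def by simp

lemma Fn_single:
  assumes "a0 < n" "b0 < n"
  shows "Fn n {(a0,b0)} = (fact (n-1) * fact n ^ (n-1)) ^ 2"
proof -
  have c: "(\<Prod>b<n. fact (n - card {a. (a,b) \<in> {(a0,b0)}})) = (\<Prod>b<n. fact (n - card {a. (b,a) \<in> {(b0,a0)}}))"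
    by (rule prod.cong) auto
  show ?thesis unfolding Fn_def c prod_single[OF assms(1)] prod_single[OF assms(2)] by (simp add: power2_eq_square)
qed

lemma low_cancel:
  assumes n: "n \<ge> 1"
  shows "(\<Sum>S\<in>{S\<in>Pow ({..<n}\<times>{..<n}). card S < 2}. (-1) ^ card S * int (Fn n S)) = 0"
proof -
  let ?U = "{..<n}\<times>{..<n}"
  have L: "{S\<in>Pow ?U. card S < 2} = insert {} ((\<lambda>u. {u}) ` ?U)"
  proof (rule subset_antisym)
    show "{S\<in>Pow ?U. card S < 2} \<subseteq> insert {} ((\<lambda>u. {u}) ` ?U)"
    proof
      fix S assume "S \<in> {S\<in>Pow ?U. card S < 2}"
      then have S: "S \<subseteq> ?U" "card S < 2" by auto
      have fin: "finite S" using S(1) finite_subset by blast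
      show "S \<in> insert {} ((\<lambda>u. {u}) ` ?U)"
      proof (cases "S = {}")
        case False
        then have "card S = 1" using S(2) fin by (simp add: card_gt_0_iff less_2_cases_iff)
        then obtain u where u: "S = {u}" using card_1_singletonE by blast
        then show ?thesis using S by auto
      qed simp
    qed
    show "insert {} ((\<lambda>u. {u}) ` ?U) \<subseteq> {S\<in>Pow ?U. card S < 2}" by auto
  qed
  have "(\<Sum>S\<in>insert {} ((\<lambda>u. {u}) ` ?U). (-1) ^ card S * int (Fn n S))
      = int (Fn n {}) + (\<Sum>S\<in>(\<lambda>u. {u}) ` ?U. (-1) ^ card S * int (Fn n S))"
    by (subst sum.insert) auto
  also have "(\<Sum>S\<in>(\<lambda>u. {u}) ` ?U. (-1) ^ card S * int (Fn n S)) = (\<Sum>u\<in>?U. - int (Fn n {u}))"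
    by (subst sum.reindex) (auto simp: inj_on_def)
  also have "\<dots> = (\<Sum>u\<in>?U. - int ((fact (n-1) * fact n ^ (n-1)) ^ 2))"
    by (rule sum.cong[OF refl]) (auto simp: Fn_single)
  also have "\<dots> = - int (n^2 * (fact (n-1) * fact n ^ (n-1)) ^ 2)"
    by (simp add: card_cartesian_product power2_eq_square)
  also have "n^2 * (fact (n-1) * fact n ^ (n-1)) ^ 2 = (n * fact (n-1) * fact n ^ (n-1)) ^ 2"
    by (simp add: power_mult_distrib)
  also have "n * fact (n-1) = (fact n :: nat)" using n fact_reduce[of n, where 'a=nat] by simp
  also have "fact n * fact n ^ (n-1) = (fact n ^ n :: nat)" using n by (metis Suc_diff_1 le_eq_less_or_eq less_Suc_eq_0_disj less_one not_less_eq power_Suc)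
  finally show ?thesis unfolding L Fn_empty by (simp add: power2_eq_square)
qed



definition hM :: "nat \<Rightarrow> (nat \<Rightarrow> nat \<Rightarrow> bool) \<Rightarrow> int" where
  "hM n M = (-1) ^ eps n M * (\<Prod>i\<in>{0..n-2}. int (fact (n - i)) ^ psi n i M)"

lemma binmat_eq: "binmat n = toM ` Pow ({..<n}\<times>{..<n})"
proof (rule subset_antisym)
  show "binmat n \<subseteq> toM ` Pow ({..<n}\<times>{..<n})"
  proof
    fix M assume M: "M \<in> binmat n"
    have "M = toM {(i,j). M i j}" unfolding toM_def by simp
    moreover have "{(i,j). M i j} \<in> Pow ({..<n}\<times>{..<n})" using M unfolding binmat_def by auto
    ultimately show "M \<in> toM ` Pow ({..<n}\<times>{..<n})" by blast
  qed
  show "toM ` Pow ({..<n}\<times>{..<n}) \<subseteq> binmat n" unfolding toM_def binmat_def by auto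
qed

lemma finite_binmat: "finite (binmat n)"
  unfolding binmat_eq by simp

lemma high_to_mat:
  assumes n: "n \<ge> 2"
  shows "(\<Sum>S\<in>{S\<in>Pow ({..<n}\<times>{..<n}). 2 \<le> card S}. (-1) ^ card S * int (Fn n S))
       = (\<Sum>M\<in>{M\<in>binmat n. 2 \<le> eps n M}. hM n M)"
proof (rule sum.reindex_bij_witness[where j=toM and i="\<lambda>M. {(i,j). M i j}"])
  fix S assume S: "S \<in> {S\<in>Pow ({..<n}\<times>{..<n}). 2 \<le> card S}"
  then have SU: "S \<subseteq> {..<n}\<times>{..<n}" by simp
  show "{(i,j). toM S i j} = S" unfolding toM_def by simp
  show "toM S \<in> {M\<in>binmat n. 2 \<le> eps n M}" using S eps_toM[OF SU] unfolding toM_def binmat_def by auto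
  have "int (Fn n S) = (\<Prod>i\<in>{0..n-2}. int (fact (n - i)) ^ psi n i (toM S))"
    unfolding Fn_psi[OF SU n] by simp
  then show "hM n (toM S) = (-1) ^ card S * int (Fn n S)"
    unfolding hM_def eps_toM[OF SU] by simp
next
  fix M assume M: "M \<in> {M\<in>binmat n. 2 \<le> eps n M}"
  show "toM {(i,j). M i j} = M" unfolding toM_def by simp
  have sub: "{(i,j). M i j} \<subseteq> {..<n}\<times>{..<n}" using M unfolding binmat_def by auto
  have "card {(i,j). M i j} = eps n M"
    using eps_toM[OF sub] unfolding toM_def by simp
  then show "{(i,j). M i j} \<in> {S\<in>Pow ({..<n}\<times>{..<n}). 2 \<le> card S}" using M sub by simp
qed

lemma mat_to_xi:
  shows "(\<Sum>M\<in>{M\<in>binmat n. 2 \<le> eps n M}. hM n M) = xi n"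
proof -
  have inv: "hM n x = hM n y" "(2 \<le> eps n x) = (2 \<le> eps n y)" if "(x,y) \<in> row_equiv n" for x y
    using row_equiv_inv[OF that] unfolding hM_def by simp_all
  have "(\<Sum>M\<in>{M\<in>binmat n. 2 \<le> eps n M}. hM n M)
     = (\<Sum>X\<in>{X\<in>binmat n // row_equiv n. 2 \<le> eps n (SOME a. a \<in> X)}. int (card X) * hM n (SOME a. a \<in> X))"
    by (rule class_sum[OF row_equiv_equiv finite_binmat]) (use inv in auto)
  also have "\<dots> = xi n"
    unfolding xi_def classes_def rep_def hM_def
    by (rule sum.cong[OF refl]) (simp add: mult_ac)
  finally show ?thesis .
qed

lemma d_xi:
  assumes n: "n \<ge> 2" and A: "A \<in> spm n"
  shows "int (card {B\<in>spm n. disjoint_mat A B}) = xi n"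
proof -
  obtain R0 C0 where RC: "R0 \<in> Pn n" "C0 \<in> Pn n" "A = matRC n R0 C0" using matRC_surj[OF A] by blast
  let ?U = "{..<n}\<times>{..<n}"
  let ?g = "\<lambda>S. (-1) ^ card S * int (Fn n S)"
  have fin: "finite (Pow ?U)" by simp
  have split: "Pow ?U = {S\<in>Pow ?U. card S < 2} \<union> {S\<in>Pow ?U. 2 \<le> card S}" by auto
  have "int (card {B\<in>spm n. disjoint_mat A B}) = (\<Sum>S\<in>Pow ?U. ?g S)"
    using d_formula[OF RC(1,2)] RC(3) by simp
  also have "\<dots> = (\<Sum>S\<in>{S\<in>Pow ?U. card S < 2}. ?g S) + (\<Sum>S\<in>{S\<in>Pow ?U. 2 \<le> card S}. ?g S)"
    by (subst split, rule sum.union_disjoint) auto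
  also have "(\<Sum>S\<in>{S\<in>Pow ?U. card S < 2}. ?g S) = 0" using low_cancel n by simp
  also have "(\<Sum>S\<in>{S\<in>Pow ?U. 2 \<le> card S}. ?g S) = xi n"
    using high_to_mat[OF n] mat_to_xi by simp
  finally show ?thesis by simp
qed



lemma card_spm: "card (spm n) = fact n ^ (2*n)"
proof -
  have "card (spm n) = card (Pn n \<times> Pn n)" using bij_betw_same_card[OF matRC_bij[of n]] by simp
  also have "\<dots> = fact n ^ n * fact n ^ n" by (simp add: card_cartesian_product card_Pn)
  also have "\<dots> = fact n ^ (2*n)" by (simp add: power_add[symmetric] mult_2)
  finally show ?thesis .
qed

lemma finite_spm: "finite (spm n)"
  using bij_betw_finite[OF matRC_bij[of n]] finite_Pn by simp

lemma disjoint_sym: "disjoint_mat A B = disjoint_mat B A"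
  unfolding disjoint_mat_def by blast

lemma spm_self:
  assumes "n \<ge> 1" "A \<in> spm n"
  shows "\<not> disjoint_mat A A"
proof -
  have "0 < n^2" using assms by simp
  then have "card {j. j < n^2 \<and> A 0 j} = 1" using assms unfolding spm_def by blast
  then obtain x where x: "{j. j < n^2 \<and> A 0 j} = {x}" by (rule card_1_singletonE)
  then have "A 0 x" by auto
  then show ?thesis unfolding disjoint_mat_def by blast
qed

lemma card2_eq:
  assumes "card P = 2" "x \<in> P" "y \<in> P" "x \<noteq> y"
  shows "P = {x,y}"
proof -
  obtain a b where ab: "P = {a,b}" "a \<noteq> b" using assms(1) card_2_iff[of P] by auto
  show ?thesis using assms(2-4) ab by auto
qed

lemma card_pairs_2:
  assumes n: "n \<ge> 1"
  shows "card (SIGMA A:spm n. {B\<in>spm n. disjoint_mat A B}) = 2 * card (disjoint_spm_pairs n)"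
proof -
  let ?D = "disjoint_spm_pairs n"
  let ?pr = "\<lambda>P. {(x,y). x \<in> P \<and> y \<in> P \<and> x \<noteq> y}"
  have finD: "finite ?D"
  proof (rule finite_subset)
    show "?D \<subseteq> Pow (spm n)" unfolding disjoint_spm_pairs_def spm_pairs_def by auto
  qed (simp add: finite_spm)
  have eq: "(SIGMA A:spm n. {B\<in>spm n. disjoint_mat A B}) = \<Union> (?pr ` ?D)"
  proof (rule subset_antisym)
    show "(SIGMA A:spm n. {B\<in>spm n. disjoint_mat A B}) \<subseteq> \<Union> (?pr ` ?D)"
    proof
      fix x assume "x \<in> (SIGMA A:spm n. {B\<in>spm n. disjoint_mat A B})"
      then obtain A B where x: "x = (A,B)" "A \<in> spm n" "B \<in> spm n" "disjoint_mat A B" by auto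
      have AB: "A \<noteq> B" using spm_self[OF n x(2)] x(4) by auto
      have s1: "{A,B} \<subseteq> spm n" using x by auto
      have s2: "card {A,B} = 2" using AB by simp
      have dBA: "disjoint_mat B A" using x(4) disjoint_sym[of A B] by simp
      have s3: "\<forall>X\<in>{A,B}. \<forall>Y\<in>{A,B}. X \<noteq> Y \<longrightarrow> disjoint_mat X Y" using x(4) dBA by blast
      have "{A,B} \<in> ?D" unfolding disjoint_spm_pairs_def spm_pairs_def
        using s1 s2 s3 by blast
      moreover have "x \<in> ?pr {A,B}" using x AB by auto
      ultimately show "x \<in> \<Union> (?pr ` ?D)" by blast
    qed
    show "\<Union> (?pr ` ?D) \<subseteq> (SIGMA A:spm n. {B\<in>spm n. disjoint_mat A B})"
    proof
      fix z assume "z \<in> \<Union> (?pr ` ?D)"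
      then obtain P x y where z: "z = (x,y)" "P \<in> ?D" "x \<in> P" "y \<in> P" "x \<noteq> y" by blast
      have "P \<subseteq> spm n" "\<forall>A\<in>P. \<forall>B\<in>P. A \<noteq> B \<longrightarrow> disjoint_mat A B"
        using z(2) unfolding disjoint_spm_pairs_def spm_pairs_def by auto
      then show "z \<in> (SIGMA A:spm n. {B\<in>spm n. disjoint_mat A B})" using z by blast
    qed
  qed
  have two: "card (?pr P) = 2" if "P \<in> ?D" for P
  proof -
    have "card P = 2" using that unfolding disjoint_spm_pairs_def spm_pairs_def by auto
    then obtain a b where P: "P = {a,b}" "a \<noteq> b" using card_2_iff[of P] by auto
    then have "?pr P = {(a,b),(b,a)}" by auto
    then show ?thesis using P by simp
  qed
  have disj: "\<forall>P\<in>?D. \<forall>Q\<in>?D. P \<noteq> Q \<longrightarrow> ?pr P \<inter> ?pr Q = {}"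
  proof (intro ballI impI)
    fix P Q assume P: "P \<in> ?D" and Q: "Q \<in> ?D" and PQ: "P \<noteq> Q"
    show "?pr P \<inter> ?pr Q = {}"
    proof (rule ccontr)
      assume "?pr P \<inter> ?pr Q \<noteq> {}"
      then obtain x y where xy: "x \<in> P" "y \<in> P" "x \<in> Q" "y \<in> Q" "x \<noteq> y" by auto
      have cP: "card P = 2" using P unfolding disjoint_spm_pairs_def spm_pairs_def by auto
      have cQ: "card Q = 2" using Q unfolding disjoint_spm_pairs_def spm_pairs_def by auto
      have "P = {x,y}" by (rule card2_eq[OF cP xy(1,2,5)])
      moreover have "Q = {x,y}" by (rule card2_eq[OF cQ xy(3,4,5)])
      ultimately show False using PQ by simp
    qed
  qed
  have "card (\<Union> (?pr ` ?D)) = (\<Sum>P\<in>?D. card (?pr P))"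
  proof (rule card_UN_disjoint[OF finD _ disj])
    show "\<forall>P\<in>?D. finite (?pr P)"
    proof
      fix P assume "P \<in> ?D"
      then have "P \<subseteq> spm n" unfolding disjoint_spm_pairs_def spm_pairs_def by auto
      then have "finite P" using finite_spm by (rule finite_subset)
      moreover have sub: "?pr P \<subseteq> P \<times> P" by auto
      ultimately show "finite (?pr P)" using finite_subset[OF sub] by simp
    qed
  qed
  also have "\<dots> = (\<Sum>P\<in>?D. 2)" using two by simp
  finally show ?thesis unfolding eq by simp
qed

theorem mainTheorem7:
  fixes n :: nat
  assumes "n \<ge> 2"
  shows "prob_disj n = real_of_int (xi n) / (real (fact n ^ (2*n)) - 1)"
proof -
  define N where "N = card (spm n)"
  have N: "N = fact n ^ (2*n)" unfolding N_def by (rule card_spm)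
  have n1: "n \<ge> 1" using assms by simp
  have f2: "fact n \<ge> (2::nat)" using assms by (metis fact_2 fact_mono)
  have "fact n ^ 1 \<le> (fact n ^ (2*n) :: nat)" using assms f2 by (intro power_increasing) auto
  then have N2: "N \<ge> 2" using N f2 by simp
  have sig: "int (card (SIGMA A:spm n. {B\<in>spm n. disjoint_mat A B})) = int N * xi n"
  proof -
    have "card (SIGMA A:spm n. {B\<in>spm n. disjoint_mat A B}) = (\<Sum>A\<in>spm n. card {B\<in>spm n. disjoint_mat A B})"
      using finite_spm by (simp add: card_SigmaI)
    then have "int (card (SIGMA A:spm n. {B\<in>spm n. disjoint_mat A B})) = (\<Sum>A\<in>spm n. int (card {B\<in>spm n. disjoint_mat A B}))"
      by simp
    also have "\<dots> = (\<Sum>A\<in>spm n. xi n)" using d_xi[OF assms] by simp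
    finally show ?thesis unfolding N_def by simp
  qed
  have D: "2 * real (card (disjoint_spm_pairs n)) = real N * real_of_int (xi n)"
  proof -
    have "int (2 * card (disjoint_spm_pairs n)) = int N * xi n" using sig card_pairs_2[OF n1] by simp
    then have "real_of_int (int (2 * card (disjoint_spm_pairs n))) = real_of_int (int N * xi n)" by simp
    then show ?thesis by simp
  qed
  have P: "card (spm_pairs n) = N choose 2"
    unfolding spm_pairs_def N_def using n_subsets[OF finite_spm] by simp
  have P2: "2 * real (N choose 2) = real N * (real N - 1)"
  proof -
    have ev: "even (N * (N - 1))" using N2 by (cases "even N") auto
    have "2 * (N choose 2) = N * (N - 1)" unfolding choose_two using ev by simp
    then have "real (2 * (N choose 2)) = real (N * (N - 1))" by simp
    then show ?thesis using N2 by (simp add: of_nat_diff)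
  qed
  have Npos: "real N - 1 > 0" "real N > 0" using N2 by auto
  have "prob_disj n = real (card (disjoint_spm_pairs n)) / real (N choose 2)"
    unfolding prob_disj_def P ..
  also have "\<dots> = (real N * real_of_int (xi n) / 2) / (real N * (real N - 1) / 2)"
  proof -
    have c1: "real (card (disjoint_spm_pairs n)) = real N * real_of_int (xi n) / 2" using D by simp
    have c2: "real (N choose 2) = real N * (real N - 1) / 2" using P2 by simp
    show ?thesis unfolding c1 c2 ..
  qed
  also have "\<dots> = real_of_int (xi n) / (real N - 1)"
    using Npos by (simp add: field_simps)
  finally show ?thesis unfolding N by simp
qed


end
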